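(* Let $(\Sigma,\theta)$ be a topological space, let $G(X)=\{\star\}+\Sigma\times X$ on $\mathbf{Set}$, whose initial algebra is $\Sigma^*$ with $\delta(\star)=\varepsilon$ and $\delta(a,w)=aw$, and let $T$ be its lift to $\mathbf{Top}$ given by $T(X)=\{\star\}+\Sigma\times X$ with the coproduct and product topologies. Then the divisibility topology on $\Sigma^*$ associated to $G$ (and $T$) is the subword topology on $\Sigma^*$.
   Context: For an analytic functor $G$ with initial algebra $(\mu G,\delta)$, $\mathrm{supp}(y)$ for $y\in G(Y)$ is the image $f(X)$ of a weak normal form $f:(X,x)\to(Y,y)$ in the category of elements of $G$; for this $G$, $\mathrm{supp}(a,w)=\{w\}$ and $\mathrm{supp}(\star)=\emptyset$. The substructure ordering $\sqsubseteq$ on $\mu G$ is the reflexive–transitive closure of "$a\in\mathrm{supp}(\delta^{-1}(b))$" (here: the suffix ordering). The divisibility topology is the least fixed point of the map sending a topology $\tau$ on $\mu G$ to the topology generated by $\{\uparrow_\sqsubseteq\delta(V):V\text{ open in }T(\mu G,\tau)\}$. The subword topology on $\Sigma^*$ is generated by the sets $\Sigma^*U_1\Sigma^*\cdots\Sigma^*U_n\Sigma^*$ with $U_i\in\theta$. *)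

theory Defs
  imports "HOL-Analysis.Analysis"
begin

text \<open>The functor G(X) = {*} + Sigma x X is rendered with the option type:
  None is the point *, Some (a, x) is the element (a, x) of Sigma x X.
  Its initial algebra is the type of lists ('a list) with structure map delta.\<close>

fun delta :: "('a \<times> 'a list) option \<Rightarrow> 'a list" where
  "delta None = []"
| "delta (Some (a, w)) = a # w"

fun supp :: "('a \<times> 'b) option \<Rightarrow> 'b set" where
  "supp None = {}"
| "supp (Some (a, w)) = {w}"

text \<open>Substructure ordering: reflexive-transitive closure of
  a \<in> supp (delta^{-1} b); delta is bijective, delta^{-1} b = the unique preimage.\<close>
definition substr :: "'a list \<Rightarrow> 'a list \<Rightarrow> bool" where
  "substr = (\<lambda>a b. \<exists>x. delta x = b \<and> a \<in> supp x)\<^sup>*\<^sup>*"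

definition upclose :: "'a list set \<Rightarrow> 'a list set" where
  "upclose S = {b. \<exists>a\<in>S. substr a b}"

text \<open>The lift T to Top: T(X) = {*} + Sigma x X with the coproduct topology
  of the one-point space and the product topology.\<close>
definition Ttop :: "'a topology \<Rightarrow> 'b topology \<Rightarrow> ('a \<times> 'b) option topology" where
  "Ttop \<theta> \<tau> = topology (\<lambda>U. U \<subseteq> insert None (Some ` (topspace \<theta> \<times> topspace \<tau>)) \<and>
                         openin (prod_topology \<theta> \<tau>) {p. Some p \<in> U})"

definition Phi :: "'a topology \<Rightarrow> 'a list topology \<Rightarrow> 'a list topology" where
  "Phi \<theta> \<tau> = topology_generated_by {upclose (delta ` V) | V. openin (Ttop \<theta> \<tau>) V}"

definition coarser :: "'b topology \<Rightarrow> 'b topology \<Rightarrow> bool" where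
  "coarser \<tau>1 \<tau>2 \<longleftrightarrow> (\<forall>S. openin \<tau>1 S \<longrightarrow> openin \<tau>2 S)"

definition is_least_fixed_point :: "('b topology \<Rightarrow> 'b topology) \<Rightarrow> 'b topology \<Rightarrow> bool" where
  "is_least_fixed_point F \<tau> \<longleftrightarrow> F \<tau> = \<tau> \<and> (\<forall>\<sigma>. F \<sigma> = \<sigma> \<longrightarrow> coarser \<tau> \<sigma>)"

definition is_divisibility_topology :: "'a topology \<Rightarrow> 'a list topology \<Rightarrow> bool" where
  "is_divisibility_topology \<theta> \<tau> \<longleftrightarrow> is_least_fixed_point (Phi \<theta>) \<tau>"

text \<open>The language Sigma* U1 Sigma* ... Sigma* Un Sigma*.\<close>
fun subword_lang :: "'a set list \<Rightarrow> 'a list set" where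
  "subword_lang [] = UNIV"
| "subword_lang (U # Us) = {u @ [a] @ v | u a v. a \<in> U \<and> v \<in> subword_lang Us}"

definition subword_topology :: "'a topology \<Rightarrow> 'a list topology" where
  "subword_topology \<theta> =
     topology_generated_by {subword_lang Us | Us. \<forall>U\<in>set Us. openin \<theta> U}"

end

theory Submission
  imports Defs
begin

lemma substr_iff: "substr a b \<longleftrightarrow> (\<exists>u. b = u @ a)"
proof
  assume "substr a b"
  then show "\<exists>u. b = u @ a" unfolding substr_def
  proof (induction rule: rtranclp_induct)
    case base then show ?case by auto
  next
    case (step y z)
    then obtain u where "y = u @ a" by auto
    moreover from step(2) obtain x where "delta x = z" "y \<in> supp x" by auto
    ultimately show ?case by (cases x) auto
  qed
next
  assume "\<exists>u. b = u @ a"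
  then obtain u where b: "b = u @ a" by auto
  have "substr a (u @ a)"
  proof (induction u)
    case Nil then show ?case unfolding substr_def by auto
  next
    case (Cons c u)
    have "(\<lambda>a b. \<exists>x. delta x = b \<and> a \<in> supp x) (u @ a) (c # u @ a)"
      by (rule exI[of _ "Some (c, u @ a)"]) simp
    from rtranclp.rtrancl_into_rtrancl[OF Cons.IH[unfolded substr_def] this]
    show ?case unfolding substr_def by simp
  qed
  then show "substr a b" using b by simp
qed

lemma upclose_eq: "upclose S = {u @ s | u s. s \<in> S}"
  unfolding upclose_def substr_iff by auto

lemma istop_T: "istopology (\<lambda>U. U \<subseteq> insert None (Some ` (topspace \<theta> \<times> topspace \<tau>)) \<and>
                         openin (prod_topology \<theta> \<tau>) {p. Some p \<in> U})"
  unfolding istopology_def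
proof (rule conjI; intro allI impI)
  fix S T :: "('a \<times> 'b) option set"
  assume a: "S \<subseteq> insert None (Some ` (topspace \<theta> \<times> topspace \<tau>)) \<and> openin (prod_topology \<theta> \<tau>) {p. Some p \<in> S}"
    and b: "T \<subseteq> insert None (Some ` (topspace \<theta> \<times> topspace \<tau>)) \<and> openin (prod_topology \<theta> \<tau>) {p. Some p \<in> T}"
  have "{p. Some p \<in> S \<inter> T} = {p. Some p \<in> S} \<inter> {p. Some p \<in> T}" by auto
  then show "S \<inter> T \<subseteq> insert None (Some ` (topspace \<theta> \<times> topspace \<tau>)) \<and>
          openin (prod_topology \<theta> \<tau>) {p. Some p \<in> S \<inter> T}" using a b by auto
next
  fix K :: "('a \<times> 'b) option set set"
  assume a: "\<forall>S\<in>K. S \<subseteq> insert None (Some ` (topspace \<theta> \<times> topspace \<tau>)) \<and> openin (prod_topology \<theta> \<tau>) {p. Some p \<in> S}"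
  have "{p. Some p \<in> \<Union>K} = \<Union> ((\<lambda>S. {p. Some p \<in> S}) ` K)" by auto
  moreover have "openin (prod_topology \<theta> \<tau>) (\<Union> ((\<lambda>S. {p. Some p \<in> S}) ` K))"
    using a by (intro openin_Union) auto
  ultimately show "\<Union>K \<subseteq> insert None (Some ` (topspace \<theta> \<times> topspace \<tau>)) \<and>
          openin (prod_topology \<theta> \<tau>) {p. Some p \<in> \<Union>K}" using a by auto
qed

lemma openin_Ttop: "openin (Ttop \<theta> \<tau>) V \<longleftrightarrow> V \<subseteq> insert None (Some ` (topspace \<theta> \<times> topspace \<tau>)) \<and>
                         openin (prod_topology \<theta> \<tau>) {p. Some p \<in> V}"
  unfolding Ttop_def topology_inverse'[OF istop_T] by (rule refl)

lemma subword_Cons_Cons: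
  "x # w \<in> subword_lang (U # Us) \<longleftrightarrow> (x \<in> U \<and> w \<in> subword_lang Us) \<or> w \<in> subword_lang (U # Us)"
proof
  assume "x # w \<in> subword_lang (U # Us)"
  then obtain u a v where e: "x # w = u @ [a] @ v" "a \<in> U" "v \<in> subword_lang Us" by auto
  show "(x \<in> U \<and> w \<in> subword_lang Us) \<or> w \<in> subword_lang (U # Us)"
  proof (cases u)
    case Nil then show ?thesis using e by auto
  next
    case (Cons c u') then show ?thesis using e by auto
  qed
next
  assume "(x \<in> U \<and> w \<in> subword_lang Us) \<or> w \<in> subword_lang (U # Us)"
  then show "x # w \<in> subword_lang (U # Us)"
  proof
    assume "x \<in> U \<and> w \<in> subword_lang Us"
    then show ?thesis by simp (metis append_Nil)
  next
    assume "w \<in> subword_lang (U # Us)"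
    then obtain u a v where "w = u @ [a] @ v" "a \<in> U" "v \<in> subword_lang Us" by auto
    then show ?thesis by simp (metis append_Cons)
  qed
qed

lemma subword_Nil: "[] \<in> subword_lang (U # Us) \<longleftrightarrow> False"
  by auto

lemma subword_prefix: "v \<in> subword_lang Us \<Longrightarrow> p @ v \<in> subword_lang Us"
proof (cases Us)
  case Nil then show ?thesis by simp
next
  case (Cons U R)
  assume "v \<in> subword_lang Us"
  then obtain u a v' where "v = u @ [a] @ v'" "a \<in> U" "v' \<in> subword_lang R" using Cons by auto
  then show ?thesis using Cons by simp (metis append.assoc append_Cons append_Nil)
qed

lemma subword_mono: "U' \<subseteq> U \<Longrightarrow> subword_lang R' \<subseteq> subword_lang R \<Longrightarrow>
   subword_lang (U' # R') \<subseteq> subword_lang (U # R)"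
  by auto blast

lemma merge:
  assumes "\<forall>U\<in>set Us1. openin \<theta> U" "\<forall>U\<in>set Us2. openin \<theta> U"
    "w \<in> subword_lang Us1" "w \<in> subword_lang Us2"
  shows "\<exists>Us3. (\<forall>U\<in>set Us3. openin \<theta> U) \<and> w \<in> subword_lang Us3 \<and>
      subword_lang Us3 \<subseteq> subword_lang Us1 \<inter> subword_lang Us2"
  using assms
proof (induction w arbitrary: Us1 Us2)
  case Nil
  have "Us1 = []" using Nil by (cases Us1) auto
  moreover have "Us2 = []" using Nil by (cases Us2) auto
  ultimately show ?case by (intro exI[of _ "[]"]) auto
next
  case (Cons x w)
  show ?case
  proof (cases Us1)
    case Nil then show ?thesis using Cons.prems by (intro exI[of _ Us2]) auto
  next
    case (Cons U R1)
    note c1 = this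
    show ?thesis
    proof (cases Us2)
      case Nil then show ?thesis using Cons.prems by (intro exI[of _ Us1]) auto
    next
      case (Cons V R2)
      note c2 = this
      have h1: "(x \<in> U \<and> w \<in> subword_lang R1) \<or> w \<in> subword_lang (U # R1)"
        using Cons.prems(3) c1 subword_Cons_Cons by metis
      have h2: "(x \<in> V \<and> w \<in> subword_lang R2) \<or> w \<in> subword_lang (V # R2)"
        using Cons.prems(4) c2 subword_Cons_Cons by metis
      have oU: "openin \<theta> U" "\<forall>U\<in>set R1. openin \<theta> U" using Cons.prems(1) c1 by auto
      have oV: "openin \<theta> V" "\<forall>U\<in>set R2. openin \<theta> U" using Cons.prems(2) c2 by auto
      from h1 h2 show ?thesis
      proof (elim disjE conjE)
        assume a: "x \<in> U" "w \<in> subword_lang R1" "x \<in> V" "w \<in> subword_lang R2"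
        obtain R3 where r: "\<forall>U\<in>set R3. openin \<theta> U" "w \<in> subword_lang R3"
          "subword_lang R3 \<subseteq> subword_lang R1 \<inter> subword_lang R2"
          using Cons.IH[of R1 R2] oU oV a by auto
        have "x # w \<in> subword_lang ((U \<inter> V) # R3)"
          by (rule subword_Cons_Cons[THEN iffD2], rule disjI1) (use a r in auto)
        moreover have "subword_lang ((U \<inter> V) # R3) \<subseteq> subword_lang (U # R1)"
          by (rule subword_mono) (use r in auto)
        moreover have "subword_lang ((U \<inter> V) # R3) \<subseteq> subword_lang (V # R2)"
          by (rule subword_mono) (use r in auto)
        ultimately show ?thesis using r oU oV c1 c2
          by (intro exI[of _ "(U \<inter> V) # R3"]) auto
      next
        assume a: "x \<in> U" "w \<in> subword_lang R1" "w \<in> subword_lang (V # R2)"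
        obtain R3 where r: "\<forall>U\<in>set R3. openin \<theta> U" "w \<in> subword_lang R3"
          "subword_lang R3 \<subseteq> subword_lang R1 \<inter> subword_lang (V # R2)"
          using Cons.IH[of R1 "V # R2"] oU oV a by auto
        have "x # w \<in> subword_lang (U # R3)"
          by (rule subword_Cons_Cons[THEN iffD2], rule disjI1) (use a r in auto)
        moreover have "subword_lang (U # R3) \<subseteq> subword_lang (U # R1)"
          by (rule subword_mono) (use r in auto)
        moreover have "subword_lang (U # R3) \<subseteq> subword_lang (V # R2)"
        proof
          fix z assume "z \<in> subword_lang (U # R3)"
          then obtain u a v where zz: "z = u @ [a] @ v" "v \<in> subword_lang R3" by auto
          then have "v \<in> subword_lang (V # R2)" using r by blast
          then have "(u @ [a]) @ v \<in> subword_lang (V # R2)" by (rule subword_prefix)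
          then show "z \<in> subword_lang (V # R2)" unfolding zz(1) by (simp only: append_assoc)
        qed
        ultimately show ?thesis using r oU oV c1 c2
          by (intro exI[of _ "U # R3"]) auto
      next
        assume a: "w \<in> subword_lang (U # R1)" "x \<in> V" "w \<in> subword_lang R2"
        obtain R3 where r: "\<forall>U\<in>set R3. openin \<theta> U" "w \<in> subword_lang R3"
          "subword_lang R3 \<subseteq> subword_lang (U # R1) \<inter> subword_lang R2"
          using Cons.IH[of "U # R1" R2] oU oV a by auto
        have "x # w \<in> subword_lang (V # R3)"
          by (rule subword_Cons_Cons[THEN iffD2], rule disjI1) (use a r in auto)
        moreover have "subword_lang (V # R3) \<subseteq> subword_lang (V # R2)"
          by (rule subword_mono) (use r in auto)
        moreover have "subword_lang (V # R3) \<subseteq> subword_lang (U # R1)"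
        proof
          fix z assume "z \<in> subword_lang (V # R3)"
          then obtain u a v where zz: "z = u @ [a] @ v" "v \<in> subword_lang R3" by auto
          then have "v \<in> subword_lang (U # R1)" using r by blast
          then have "(u @ [a]) @ v \<in> subword_lang (U # R1)" by (rule subword_prefix)
          then show "z \<in> subword_lang (U # R1)" unfolding zz(1) by (simp only: append_assoc)
        qed
        ultimately show ?thesis using r oU oV c1 c2
          by (intro exI[of _ "V # R3"]) auto
      next
        assume a: "w \<in> subword_lang (U # R1)" "w \<in> subword_lang (V # R2)"
        obtain R3 where r: "\<forall>U\<in>set R3. openin \<theta> U" "w \<in> subword_lang R3"
          "subword_lang R3 \<subseteq> subword_lang (U # R1) \<inter> subword_lang (V # R2)"
          using Cons.IH[of "U # R1" "V # R2"] oU oV a by auto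
        have "x # w \<in> subword_lang R3" using subword_prefix[of w R3 "[x]"] r by simp
        then show ?thesis using r c1 c2 by (intro exI[of _ R3]) auto
      qed
    qed
  qed
qed

lemma subword_base:
  assumes "openin (subword_topology \<theta>) Ob" "w \<in> Ob"
  shows "\<exists>Us. (\<forall>U\<in>set Us. openin \<theta> U) \<and> w \<in> subword_lang Us \<and> subword_lang Us \<subseteq> Ob"
proof -
  have "generate_topology_on {subword_lang Us | Us. \<forall>U\<in>set Us. openin \<theta> U} Ob"
    using assms(1) unfolding subword_topology_def openin_topology_generated_by_iff .
  then show ?thesis using assms(2)
  proof (induction arbitrary: w rule: generate_topology_on.induct)
    case Empty then show ?case by simp
  next
    case (Int a b)
    from Int.prems have wa: "w \<in> a" and wb: "w \<in> b" by auto
    obtain Us1 where u1: "\<forall>U\<in>set Us1. openin \<theta> U" "w \<in> subword_lang Us1" "subword_lang Us1 \<subseteq> a"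
      using Int.IH(1)[OF wa] by blast
    obtain Us2 where u2: "\<forall>U\<in>set Us2. openin \<theta> U" "w \<in> subword_lang Us2" "subword_lang Us2 \<subseteq> b"
      using Int.IH(2)[OF wb] by blast
    obtain Us3 where u3: "\<forall>U\<in>set Us3. openin \<theta> U" "w \<in> subword_lang Us3"
      "subword_lang Us3 \<subseteq> subword_lang Us1 \<inter> subword_lang Us2"
      using merge[OF u1(1) u2(1) u1(2) u2(2)] by blast
    have "subword_lang Us3 \<subseteq> a \<inter> b" using u3(3) u1(3) u2(3) by auto
    then show ?case using u3(1,2) by blast
  next
    case (UN K)
    then obtain k where k: "k \<in> K" "w \<in> k" by auto
    obtain Us where u: "\<forall>U\<in>set Us. openin \<theta> U" "w \<in> subword_lang Us" "subword_lang Us \<subseteq> k"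
      using UN.IH[OF k] by blast
    have "subword_lang Us \<subseteq> \<Union>K" using u(3) k(1) by auto
    then show ?case using u(1,2) by blast
  next
    case (Basis s)
    then obtain Us where "s = subword_lang Us" "\<forall>U\<in>set Us. openin \<theta> U" by auto
    then show ?case using Basis.prems by auto
  qed
qed

lemma gen_sub:
  assumes "\<And>S. S \<in> B \<Longrightarrow> openin \<sigma> S" "openin (topology_generated_by B) S"
  shows "openin \<sigma> S"
  using openin_topology_generated_by[OF assms(2)]
  by (rule generate_topology_on_coarsest[rotated 2]) (auto simp: istopology_openin assms(1))

lemma delta_image: "delta ` (Some ` (U \<times> Ob)) = {a # v | a v. a \<in> U \<and> v \<in> Ob}"
proof
  show "delta ` (Some ` (U \<times> Ob)) \<subseteq> {a # v | a v. a \<in> U \<and> v \<in> Ob}" by auto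
  show "{a # v | a v. a \<in> U \<and> v \<in> Ob} \<subseteq> delta ` (Some ` (U \<times> Ob))"
  proof
    fix x assume "x \<in> {a # v | a v. a \<in> U \<and> v \<in> Ob}"
    then obtain a v where "x = a # v" "a \<in> U" "v \<in> Ob" by auto
    then have "x = delta (Some (a, v))" "Some (a, v) \<in> Some ` (U \<times> Ob)" by auto
    then show "x \<in> delta ` (Some ` (U \<times> Ob))" by blast
  qed
qed

lemma Phi_gen: "openin (Ttop \<theta> \<tau>) V \<Longrightarrow> openin (Phi \<theta> \<tau>) (upclose (delta ` V))"
  unfolding Phi_def by (rule topology_generated_by_Basis) blast

lemma Phi_cons:
  assumes "openin \<theta> U" "openin \<tau> Ob"
  shows "openin (Phi \<theta> \<tau>) {u @ [a] @ v | u a v. a \<in> U \<and> v \<in> Ob}"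
proof -
  let ?V = "Some ` (U \<times> Ob)"
  have "{p. Some p \<in> ?V} = U \<times> Ob" by auto
  moreover have "?V \<subseteq> insert None (Some ` (topspace \<theta> \<times> topspace \<tau>))"
    using openin_subset[OF assms(1)] openin_subset[OF assms(2)] by auto
  ultimately have "openin (Ttop \<theta> \<tau>) ?V"
    unfolding openin_Ttop using assms by (simp add: openin_prod_Times_iff)
  moreover have "upclose (delta ` ?V) = {u @ [a] @ v | u a v. a \<in> U \<and> v \<in> Ob}"
    unfolding upclose_eq delta_image by auto
  ultimately show ?thesis using Phi_gen by metis
qed

lemma Phi_UNIV: "openin (Phi \<theta> \<tau>) UNIV"
proof -
  have "openin (Ttop \<theta> \<tau>) {None}"
    unfolding openin_Ttop by simp
  moreover have "upclose (delta ` {None}) = UNIV"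
    unfolding upclose_eq by auto
  ultimately show ?thesis using Phi_gen by metis
qed

lemma fixed_contains:
  assumes "Phi \<theta> \<sigma> = \<sigma>" "\<forall>U\<in>set Us. openin \<theta> U"
  shows "openin \<sigma> (subword_lang Us)"
  using assms(2)
proof (induction Us)
  case Nil then show ?case using Phi_UNIV[of \<theta> \<sigma>] assms(1) by simp
next
  case (Cons U Us)
  then show ?case using Phi_cons[of \<theta> U \<sigma> "subword_lang Us"] assms(1) by simp
qed

lemma basic_open: "\<forall>U\<in>set Us. openin \<theta> U \<Longrightarrow> openin (subword_topology \<theta>) (subword_lang Us)"
  unfolding subword_topology_def by (rule topology_generated_by_Basis) blast

lemma least_sub:
  assumes "Phi \<theta> \<sigma> = \<sigma>"
  shows "coarser (subword_topology \<theta>) \<sigma>"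
  unfolding coarser_def
proof (intro allI impI)
  fix S assume "openin (subword_topology \<theta>) S"
  then show "openin \<sigma> S" unfolding subword_topology_def
  proof (rule gen_sub[rotated])
    fix T assume "T \<in> {subword_lang Us |Us. \<forall>U\<in>set Us. openin \<theta> U}"
    then obtain Us where "T = subword_lang Us" "\<forall>U\<in>set Us. openin \<theta> U" by blast
    then show "openin \<sigma> T" using fixed_contains[OF assms] by simp
  qed
qed

lemma d1:
  assumes "openin (subword_topology \<theta>) S"
  shows "openin (Phi \<theta> (subword_topology \<theta>)) S"
  using assms unfolding subword_topology_def
proof (rule gen_sub[rotated])
  fix T assume "T \<in> {subword_lang Us |Us. \<forall>U\<in>set Us. openin \<theta> U}"
  then obtain Us where T: "T = subword_lang Us" and o: "\<forall>U\<in>set Us. openin \<theta> U" by blast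
  show "openin (Phi \<theta> (topology_generated_by {subword_lang Us |Us. \<forall>U\<in>set Us. openin \<theta> U})) T"
  proof (cases Us)
    case Nil then show ?thesis using Phi_UNIV T by simp
  next
    case (Cons U R)
    have "openin (subword_topology \<theta>) (subword_lang R)" using o Cons by (intro basic_open) simp
    moreover have "openin \<theta> U" using o Cons by simp
    ultimately have "openin (Phi \<theta> (subword_topology \<theta>)) (subword_lang (U # R))"
      using Phi_cons by simp
    then show ?thesis using T Cons unfolding subword_topology_def by simp
  qed
qed

lemma d2_gen:
  assumes V: "openin (Ttop \<theta> (subword_topology \<theta>)) V"
  shows "openin (subword_topology \<theta>) (upclose (delta ` V))"
proof (cases "None \<in> V")
  case True
  have "upclose (delta ` V) = UNIV"
  proof -
    have "[] \<in> delta ` V" using True by (metis delta.simps(1) imageI)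
    then have "x \<in> upclose (delta ` V)" for x unfolding upclose_eq mem_Collect_eq
      by (intro exI[of _ x] exI[of _ "[]"]) simp
    then show ?thesis by auto
  qed
  then show ?thesis using basic_open[of "[]"] by simp
next
  case False
  let ?S = "subword_topology \<theta>"
  have W: "openin (prod_topology \<theta> ?S) {p. Some p \<in> V}" using V openin_Ttop by blast
  show ?thesis
  proof (rule openin_subopen[THEN iffD2], intro ballI)
    fix z assume "z \<in> upclose (delta ` V)"
    then obtain u s where z: "z = u @ s" "s \<in> delta ` V" unfolding upclose_eq by auto
    then obtain y where y: "y \<in> V" "s = delta y" by auto
    obtain a w where aw: "y = Some (a, w)"
    proof (cases y)
      case None then show ?thesis using False y by simp
    next
      case (Some p) then show ?thesis using that by (cases p) simp
    qed
    then have aw2: "(a, w) \<in> {p. Some p \<in> V}" using y by simp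
    obtain A Ob where AO: "openin \<theta> A" "openin ?S Ob" "a \<in> A" "w \<in> Ob"
      "A \<times> Ob \<subseteq> {p. Some p \<in> V}"
      using W[unfolded openin_prod_topology_alt, rule_format, OF aw2] by blast
    obtain Us where Us: "\<forall>U\<in>set Us. openin \<theta> U" "w \<in> subword_lang Us" "subword_lang Us \<subseteq> Ob"
      using subword_base[OF AO(2) AO(4)] by blast
    have "openin ?S (subword_lang (A # Us))" using basic_open[of "A # Us"] Us(1) AO(1) by simp
    moreover have "z \<in> subword_lang (A # Us)"
    proof -
      have "z = u @ [a] @ w" using z y aw by simp
      then show ?thesis unfolding subword_lang.simps mem_Collect_eq using AO(3) Us(2)
        by (intro exI[of _ u] exI[of _ a] exI[of _ w]) simp
    qed
    moreover have "subword_lang (A # Us) \<subseteq> upclose (delta ` V)"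
    proof
      fix t assume "t \<in> subword_lang (A # Us)"
      then obtain u' a' v where t: "t = u' @ [a'] @ v" "a' \<in> A" "v \<in> subword_lang Us" by auto
      then have "(a', v) \<in> A \<times> Ob" using Us(3) by blast
      then have "Some (a', v) \<in> V" using AO(5) by blast
      then have "delta (Some (a', v)) \<in> delta ` V" by (rule imageI)
      then have "a' # v \<in> delta ` V" by simp
      then show "t \<in> upclose (delta ` V)" unfolding upclose_eq mem_Collect_eq using t
        by (intro exI[of _ u'] exI[of _ "a' # v"]) simp
    qed
    ultimately show "\<exists>T. openin ?S T \<and> z \<in> T \<and> T \<subseteq> upclose (delta ` V)" by blast
  qed
qed

lemma d2:
  assumes "openin (Phi \<theta> (subword_topology \<theta>)) S"
  shows "openin (subword_topology \<theta>) S"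
  using assms unfolding Phi_def
proof (rule gen_sub[rotated])
  fix T assume "T \<in> {upclose (delta ` V) |V. openin (Ttop \<theta> (subword_topology \<theta>)) V}"
  then obtain V where "T = upclose (delta ` V)" "openin (Ttop \<theta> (subword_topology \<theta>)) V" by blast
  then show "openin (subword_topology \<theta>) T" using d2_gen by simp
qed

theorem mainTheorem16:
  fixes \<theta> :: "'a topology"
  assumes "topspace \<theta> = UNIV"
  shows "is_divisibility_topology \<theta> (subword_topology \<theta>)"
proof -
  have "Phi \<theta> (subword_topology \<theta>) = subword_topology \<theta>"
    unfolding topology_eq using d1 d2 by blast
  then show ?thesis unfolding is_divisibility_topology_def is_least_fixed_point_def
    using least_sub by blast
qed

end
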